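(* Consider the general CA-RRM with affine indices $u_f(A)=\alpha_f+\beta_f^\top\psi(A)$, $f\in\mathcal F$, assume $P(i\mid A)\in(0,1)$ for all $i\in A$ and all menus $A$ in the support, and impose the normalization $(\alpha_{f_0},\beta_{f_0})=(0,\mathbf 0)$ for a baseline rule $f_0$. Let $d=\dim\psi$. Suppose there exist $d+1$ feature values $x^{(0)},\dots,x^{(d)}$ such that: (G1) for each $k\in\{0,\dots,d\}$, the matrix $H^{(k)}$ obtained by stacking the row vectors $h_i(A)^\top$ over all multi-sided menus $A$ with $\psi(A)=x^{(k)}$ and all non-reference alternatives $i\in A\setminus\{i_0(A)\}$ has rank $|\mathcal F|-1$; (G2) the $(d+1)\times(d+1)$ matrix $X$ with $k$-th row $(1,(x^{(k)})^\top)$ has full rank. Then the full parameter vector $\{(\alpha_f,\beta_f)\}_{f\in\mathcal F}$ is globally identified (up to the normalization) from the population objects $\{P(i\mid A),\kappa^i(A),\psi(A)\}$: any two normalized parameter vectors generating the same choice probabilities on these menus coincide.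
   Context: General setting: a finite collection $\mathcal M$ of menus, each a finite set $A$ of alternatives with $|A|\ge2$. A finite rule library $\mathcal F$; each rule $f$ has an activity set $\mathcal A_f\subseteq\mathcal M$ and a recommendation $r_f(A)\in A$ for $A\in\mathcal A_f$. The recommending set is $\mathcal I_i(A)=\{f: A\in\mathcal A_f,\ r_f(A)=i\}$, the active set is $\mathcal F_A=\bigcup_{i\in A}\mathcal I_i(A)$, and $\kappa_f^i(A)=\mathbf 1\{f\in\mathcal I_i(A)\}$. The model (softmax-gated CA-RRM) gives $$P(i\mid A;\theta)=\frac{\sum_{f\in\mathcal I_i(A)}\exp(u_f(A))}{\sum_{g\in\mathcal F_A}\exp(u_g(A))},\qquad u_f(A)=\alpha_f+\beta_f^\top\psi(A),$$ with $\psi:\mathcal M\to\mathbb R^d$. A menu is multi-sided if at least two distinct alternatives are recommended by some active rule. For each multi-sided menu fix a reference alternative $i_0(A)$ with $\mathcal I_{i_0(A)}(A)\neq\varnothing$; for $i\in A\setminus\{i_0(A)\}$ let $r_i(A)=P(i\mid A)/P(i_0(A)\mid A)$ and let $h_i(A)\in\mathbb R^{|\mathcal F|}$ have entries $h_{i,f}(A)=\kappa_f^i(A)-r_i(A)\kappa_f^{i_0(A)}(A)$. Positive weights $\omega_f(x)=\exp(\alpha_f+\beta_f^\top x)$. *)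

theory Defs
  imports "HOL-Analysis.Analysis"
begin

text \<open>Menus are finite sets of alternatives of type 'a; the rule library is the
  finite type 'f (so F = UNIV); features live in real^'d (d = CARD('d)).
  act f is the activity set of rule f, rec f A its recommendation.\<close>

definition recset :: "('f \<Rightarrow> 'a set set) \<Rightarrow> ('f \<Rightarrow> 'a set \<Rightarrow> 'a) \<Rightarrow> 'a \<Rightarrow> 'a set \<Rightarrow> 'f set" where
  "recset act rec i A = {f. A \<in> act f \<and> rec f A = i}"

definition activeset :: "('f \<Rightarrow> 'a set set) \<Rightarrow> ('f \<Rightarrow> 'a set \<Rightarrow> 'a) \<Rightarrow> 'a set \<Rightarrow> 'f set" where
  "activeset act rec A = (\<Union>i\<in>A. recset act rec i A)"

definition kappa :: "('f \<Rightarrow> 'a set set) \<Rightarrow> ('f \<Rightarrow> 'a set \<Rightarrow> 'a) \<Rightarrow> 'f \<Rightarrow> 'a \<Rightarrow> 'a set \<Rightarrow> real" where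
  "kappa act rec f i A = (if f \<in> recset act rec i A then 1 else 0)"

definition uidx :: "('f \<Rightarrow> real) \<Rightarrow> ('f \<Rightarrow> real^'d) \<Rightarrow> ('a set \<Rightarrow> real^'d) \<Rightarrow> 'f \<Rightarrow> 'a set \<Rightarrow> real" where
  "uidx \<alpha> \<beta> \<psi> f A = \<alpha> f + \<beta> f \<bullet> \<psi> A"

definition caprob :: "('f \<Rightarrow> 'a set set) \<Rightarrow> ('f \<Rightarrow> 'a set \<Rightarrow> 'a) \<Rightarrow> ('a set \<Rightarrow> real^'d)
    \<Rightarrow> ('f \<Rightarrow> real) \<Rightarrow> ('f \<Rightarrow> real^'d) \<Rightarrow> 'a \<Rightarrow> 'a set \<Rightarrow> real" where
  "caprob act rec \<psi> \<alpha> \<beta> i A =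
     (\<Sum>f\<in>recset act rec i A. exp (uidx \<alpha> \<beta> \<psi> f A)) /
     (\<Sum>g\<in>activeset act rec A. exp (uidx \<alpha> \<beta> \<psi> g A))"

definition multisided :: "('f \<Rightarrow> 'a set set) \<Rightarrow> ('f \<Rightarrow> 'a set \<Rightarrow> 'a) \<Rightarrow> 'a set \<Rightarrow> bool" where
  "multisided act rec A \<longleftrightarrow>
     (\<exists>i\<in>A. \<exists>j\<in>A. i \<noteq> j \<and> recset act rec i A \<noteq> {} \<and> recset act rec j A \<noteq> {})"

definition hvec :: "('f::finite \<Rightarrow> 'a set set) \<Rightarrow> ('f \<Rightarrow> 'a set \<Rightarrow> 'a) \<Rightarrow> ('a \<Rightarrow> 'a set \<Rightarrow> real)
    \<Rightarrow> ('a set \<Rightarrow> 'a) \<Rightarrow> 'a \<Rightarrow> 'a set \<Rightarrow> real^'f" where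
  "hvec act rec P i0 i A =
     (\<chi> f. kappa act rec f i A - (P i A / P (i0 A) A) * kappa act rec f (i0 A) A)"

text \<open>Rank of the stacked matrix H^(k): dimension of the span of its rows.\<close>
definition Hrank :: "'a set set \<Rightarrow> ('f::finite \<Rightarrow> 'a set set) \<Rightarrow> ('f \<Rightarrow> 'a set \<Rightarrow> 'a)
    \<Rightarrow> ('a set \<Rightarrow> real^'d) \<Rightarrow> ('a \<Rightarrow> 'a set \<Rightarrow> real) \<Rightarrow> ('a set \<Rightarrow> 'a) \<Rightarrow> real^'d \<Rightarrow> nat" where
  "Hrank M act rec \<psi> P i0 x =
     dim {hvec act rec P i0 i A | A i. A \<in> M \<and> multisided act rec A \<and> \<psi> A = x
                                     \<and> i \<in> A \<and> i \<noteq> i0 A}"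

text \<open>The (d+1)x(d+1) matrix X with k-th row (1, x^(k)); index None is the constant column.\<close>
definition Xmat :: "('d option \<Rightarrow> real^'d) \<Rightarrow> real^('d::finite option)^('d option)" where
  "Xmat x = (\<chi> k j. case j of None \<Rightarrow> 1 | Some l \<Rightarrow> x k $ l)"

end

theory Submission
  imports Defs
begin

lemma ratio_lemma:
  fixes act :: "'f::finite \<Rightarrow> 'a set set"
  assumes ne: "recset act rec j A \<noteq> {}" and jA: "j \<in> A"
  shows "caprob act rec \<psi> \<alpha> \<beta> i A / caprob act rec \<psi> \<alpha> \<beta> j A
           * (\<Sum>f\<in>recset act rec j A. exp (uidx \<alpha> \<beta> \<psi> f A))
         = (\<Sum>f\<in>recset act rec i A. exp (uidx \<alpha> \<beta> \<psi> f A))"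
proof -
  define Nj where "Nj = (\<Sum>f\<in>recset act rec j A. exp (uidx \<alpha> \<beta> \<psi> f A))"
  define D where "D = (\<Sum>g\<in>activeset act rec A. exp (uidx \<alpha> \<beta> \<psi> g A))"
  have Nj: "Nj > 0" unfolding Nj_def using ne by (intro sum_pos) auto
  have "recset act rec j A \<subseteq> activeset act rec A" using jA unfolding activeset_def by auto
  then have "activeset act rec A \<noteq> {}" using ne by auto
  then have D: "D > 0" unfolding D_def by (intro sum_pos) auto
  show ?thesis using Nj D unfolding caprob_def Nj_def[symmetric] D_def[symmetric]
    by (simp add: field_simps)
qed

lemma kappa_sum:
  fixes act :: "'f::finite \<Rightarrow> 'a set set"
  shows "(\<Sum>f\<in>UNIV. kappa act rec f i A * w f) = (\<Sum>f\<in>recset act rec i A. w f)"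
proof -
  have "(\<lambda>f. kappa act rec f i A * w f) = (\<lambda>f. if f \<in> recset act rec i A then w f else 0)"
    unfolding kappa_def by auto
  have "(\<Sum>f\<in>UNIV. kappa act rec f i A * w f) = (\<Sum>f\<in>UNIV. if f \<in> recset act rec i A then w f else 0)"
    unfolding kappa_def by (intro sum.cong) auto
  also have "\<dots> = sum w (UNIV \<inter> recset act rec i A)"
    by (rule sum.inter_restrict[symmetric]) simp
  finally show ?thesis by simp
qed

lemma h_orth:
  fixes act :: "'f::finite \<Rightarrow> 'a set set"
  assumes ne: "recset act rec (rr A) A \<noteq> {}" and jA: "rr A \<in> A"
    and PP: "P i A / P (rr A) A = caprob act rec \<psi> \<alpha> \<beta> i A / caprob act rec \<psi> \<alpha> \<beta> (rr A) A"
  shows "hvec act rec P rr i A \<bullet> (\<chi> f. exp (uidx \<alpha> \<beta> \<psi> f A)) = 0"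
proof -
  have "hvec act rec P rr i A \<bullet> (\<chi> f. exp (uidx \<alpha> \<beta> \<psi> f A))
     = (\<Sum>f\<in>UNIV. kappa act rec f i A * exp (uidx \<alpha> \<beta> \<psi> f A))
       - (P i A / P (rr A) A) * (\<Sum>f\<in>UNIV. kappa act rec f (rr A) A * exp (uidx \<alpha> \<beta> \<psi> f A))"
    unfolding hvec_def inner_vec_def
    by (simp add: algebra_simps sum_subtractf sum_distrib_left)
  also have "\<dots> = 0"
    unfolding kappa_sum PP using ratio_lemma[OF ne jA, of \<psi> \<alpha> \<beta> i] by simp
  finally show ?thesis .
qed

theorem theoremA1:
  fixes M :: "'a set set"
    and act :: "'f::finite \<Rightarrow> 'a set set"
    and rec :: "'f \<Rightarrow> 'a set \<Rightarrow> 'a"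
    and \<psi> :: "'a set \<Rightarrow> real^'d::finite"
    and i0 :: "'a set \<Rightarrow> 'a"
    and f0 :: "'f"
    and x :: "'d option \<Rightarrow> real^'d"
    and \<alpha> \<alpha>' :: "'f \<Rightarrow> real"
    and \<beta> \<beta>' :: "'f \<Rightarrow> real^'d"
  assumes M_fin: "finite M"
    and M_menu: "\<And>A. A \<in> M \<Longrightarrow> finite A \<and> card A \<ge> 2"
    and act_sub: "\<And>f. act f \<subseteq> M"
    and rec_in: "\<And>f A. A \<in> act f \<Longrightarrow> rec f A \<in> A"
    and i0_ref: "\<And>A. A \<in> M \<Longrightarrow> multisided act rec A \<Longrightarrow>
                   i0 A \<in> A \<and> recset act rec (i0 A) A \<noteq> {}"
    and norm: "\<alpha> f0 = 0" "\<beta> f0 = 0"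
    and norm': "\<alpha>' f0 = 0" "\<beta>' f0 = 0"
    and same: "\<And>A i. A \<in> M \<Longrightarrow> i \<in> A \<Longrightarrow>
                 caprob act rec \<psi> \<alpha> \<beta> i A = caprob act rec \<psi> \<alpha>' \<beta>' i A"
    and interior: "\<And>A i. A \<in> M \<Longrightarrow> i \<in> A \<Longrightarrow>
                 0 < caprob act rec \<psi> \<alpha> \<beta> i A \<and> caprob act rec \<psi> \<alpha> \<beta> i A < 1"
    and G1: "\<And>k. Hrank M act rec \<psi> (caprob act rec \<psi> \<alpha> \<beta>) i0 (x k) = CARD('f) - 1"
    and G2: "rank (Xmat x) = CARD('d option)"
  shows "\<alpha> = \<alpha>' \<and> \<beta> = \<beta>'"
proof -
  define P where "P = caprob act rec \<psi> \<alpha> \<beta>"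
  have lin: "\<alpha> f + \<beta> f \<bullet> x k = \<alpha>' f + \<beta>' f \<bullet> x k" for f k
  proof -
    define S where "S = {hvec act rec P i0 i A | A i. A \<in> M \<and> multisided act rec A \<and> \<psi> A = x k
                                     \<and> i \<in> A \<and> i \<noteq> i0 A}"
    have dS: "dim S = CARD('f) - 1" using G1[of k] unfolding Hrank_def S_def P_def .
    define w where "w = (\<chi> f. exp (\<alpha> f + \<beta> f \<bullet> x k))"
    define w' where "w' = (\<chi> f. exp (\<alpha>' f + \<beta>' f \<bullet> x k))"
    define C where "C = {y \<in> UNIV. \<forall>z \<in> span S. orthogonal z y}"
    have "dim C + dim (span S) = dim (UNIV :: (real^'f) set)"
      unfolding C_def by (rule dim_subspace_orthogonal_to_vectors) auto
    moreover have "CARD('f) > 0" by simp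
    moreover have "dim (UNIV :: (real^'f) set) = CARD('f)" by simp
    ultimately have dC: "dim C = 1" using dS by (simp only: dim_span)
    have wC: "w \<in> C" and w'C: "w' \<in> C"
    proof -
      have hw: "h \<bullet> w = 0 \<and> h \<bullet> w' = 0" if "h \<in> S" for h
      proof -
        obtain A i where h: "h = hvec act rec P i0 i A" and A: "A \<in> M" "multisided act rec A"
          "\<psi> A = x k" "i \<in> A" "i \<noteq> i0 A" using \<open>h \<in> S\<close> unfolding S_def by blast
        have r: "i0 A \<in> A" "recset act rec (i0 A) A \<noteq> {}" using i0_ref[OF A(1,2)] by auto
        have ww: "w = (\<chi> f. exp (uidx \<alpha> \<beta> \<psi> f A))" "w' = (\<chi> f. exp (uidx \<alpha>' \<beta>' \<psi> f A))"
          unfolding w_def w'_def uidx_def using A(3) by auto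
        show ?thesis unfolding h ww
          using h_orth[where rr=i0 and A=A and P=P and i=i and \<psi>=\<psi> and \<alpha>=\<alpha> and \<beta>=\<beta>, OF r(2,1)]
            h_orth[where rr=i0 and A=A and P=P and i=i and \<psi>=\<psi> and \<alpha>=\<alpha>' and \<beta>=\<beta>', OF r(2,1)]
            same[OF A(1) A(4)] same[OF A(1) r(1)] unfolding P_def by simp
      qed
      show "w \<in> C" unfolding C_def
      proof (intro CollectI conjI ballI UNIV_I)
        fix z assume "z \<in> span S"
        then have "orthogonal w z"
          by (rule orthogonal_to_span) (use hw in \<open>auto simp: orthogonal_def inner_commute\<close>)
        then show "orthogonal z w" by (simp add: orthogonal_commute)
      qed
      show "w' \<in> C" unfolding C_def
      proof (intro CollectI conjI ballI UNIV_I)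
        fix z assume "z \<in> span S"
        then have "orthogonal w' z"
          by (rule orthogonal_to_span) (use hw in \<open>auto simp: orthogonal_def inner_commute\<close>)
        then show "orthogonal z w'" by (simp add: orthogonal_commute)
      qed
    qed
    have wnz: "w \<noteq> 0" unfolding w_def by (metis exp_not_eq_zero vec_lambda_beta zero_index)
    have "w' \<in> span {w}"
    proof (rule ccontr)
      assume "w' \<notin> span {w}"
      then have "independent {w', w}"
        using wnz by (simp add: independent_insert)
      then have "card {w', w} \<le> dim C"
        using wC w'C by (intro independent_card_le_dim) auto
      moreover have "w' \<noteq> w" using \<open>w' \<notin> span {w}\<close> by (auto simp: span_base)
      ultimately show False using dC by simp
    qed
    then obtain c where c: "w' = c *\<^sub>R w" by (auto simp: span_singleton)
    have "w' $ f0 = 1" "w $ f0 = 1" unfolding w_def w'_def using norm norm' by auto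
    then have "c = 1" using c by simp
    then have "w' $ f = w $ f" using c by simp
    then show ?thesis unfolding w_def w'_def by simp
  qed
  have each: "\<alpha> f = \<alpha>' f \<and> \<beta> f = \<beta>' f" for f
  proof -
    define v :: "real^('d option)" where
      "v = (\<chi> j. case j of None \<Rightarrow> \<alpha> f - \<alpha>' f | Some l \<Rightarrow> (\<beta> f - \<beta>' f) $ l)"
    have "Xmat x *v v = 0"
    proof (rule vec_eq_iff[THEN iffD2], rule allI)
      fix k
      have "(Xmat x *v v) $ k = (\<Sum>j\<in>UNIV. Xmat x $ k $ j * v $ j)"
        by (simp add: matrix_vector_mult_def)
      also have "\<dots> = (\<alpha> f - \<alpha>' f) + (\<Sum>l\<in>UNIV. x k $ l * (\<beta> f - \<beta>' f) $ l)"
        by (simp add: UNIV_option_conv sum.reindex Xmat_def v_def)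
      also have "\<dots> = (\<alpha> f + \<beta> f \<bullet> x k) - (\<alpha>' f + \<beta>' f \<bullet> x k)"
        by (simp add: inner_vec_def algebra_simps sum_subtractf)
      also have "\<dots> = 0" using lin by simp
      finally show "(Xmat x *v v) $ k = 0 $ k" by simp
    qed
    moreover have "inj ((*v) (Xmat x))" using G2 full_rank_injective by blast
    ultimately have "v = 0" by (metis injD matrix_vector_mult_0_right)
    then have "v $ None = 0" "\<And>l. v $ Some l = 0" by auto
    then show ?thesis unfolding v_def by (auto simp: vec_eq_iff)
  qed
  show ?thesis using each by auto
qed

end
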